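(* Let $(M,\hat J,\hat\theta)$ be a pseudohermitian submanifold of $H_n$ of CR dimension $m$ with fundamental vector field $\nu$, and let $(e_1,\dots,e_{2n})$ be a Darboux frame over an open set $U\subset M$ with dual forms $\omega^1,\dots,\omega^{2n},\Theta$. Let $\hat e_j=e_j$, $\hat e_{m+j}=e_{n+j}$ ($1\le j\le m$), $\hat T=T+\nu$, and let $\{\hat\omega^1,\dots,\hat\omega^{2m},\hat\theta\}$ be the coframe on $U$ dual to $\{\hat e_1,\dots,\hat e_{2m},\hat T\}$. Then, for $1\le j\le m$ and $m+1\le a\le n$, $$\omega^j|_M=\hat\omega^j,\quad \omega^{n+j}|_M=\hat\omega^{m+j},\quad \omega^a|_M=\tfrac12\langle\nu,e_a\rangle\hat\theta,\quad \omega^{n+a}|_M=\tfrac12\langle\nu,e_{n+a}\rangle\hat\theta,$$ and hence, with $\theta^\beta=\omega^\beta+i\omega^{n+\beta}$, $\hat\theta^j=\hat\omega^j+i\hat\omega^{m+j}$ and $Z_a=\frac12(e_a-ie_{n+a})$, $$\theta^j|_M=\hat\theta^j,\qquad \theta^a|_M=\langle\nu,Z_a\rangle\hat\theta.$$ In particular, if $\nu=0$ then $\theta^a|_M=0$.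
   Context: $H_n$ is $\mathbb{R}^{2n+1}$ with coordinates $(x,y,t)$, $\Theta=dt+\sum_\beta(x_\beta dy_\beta-y_\beta dx_\beta)$, $\xi=\ker\Theta$ spanned by $\mathring e_\beta=\partial_{x_\beta}+y_\beta\partial_t$, $\mathring e_{n+\beta}=\partial_{y_\beta}-x_\beta\partial_t$; $J\mathring e_\beta=\mathring e_{n+\beta}$, $J\mathring e_{n+\beta}=-\mathring e_\beta$; $T=\partial_t$. The adapted metric makes $\mathring e_1,\dots,\mathring e_{2n},T$ orthonormal. The Levi metric on $\xi$ is $\langle X,Y\rangle=d\Theta(X,JY)$, extended to $\xi\otimes\mathbb C$ as a Hermitian form (complex-linear in the first slot, conjugate-linear in the second). A pseudohermitian submanifold of CR dimension $m$ is a $(2m+1)$-dimensional submanifold $M$ with $\hat\xi=TM\cap\xi$ of rank $2m$, $J$-invariant, and $(M,\hat J=J|_{\hat\xi},\hat\theta=\Theta|_M)$ pseudohermitian with $\ker\hat\theta=\hat\xi$. $\hat\xi^\perp$ is the orthogonal complement of $\hat\xi$ in $\xi|_M$; the fundamental vector field $\nu$ is the unique section of $\hat\xi^\perp$ with $T+\nu$ tangent to $M$. Indices: $1\le j\le m$, $m+1\le a\le n$, $1\le\beta\le n$. A Darboux frame over $U\subset M$ is a family of sections $e_1,\dots,e_{2n}$ of $\xi$ along $U$, orthonormal for the adapted metric, with $e_{n+\beta}=Je_\beta$, $e_j\in\hat\xi$, $e_a\in\hat\xi^\perp$; $\omega^1,\dots,\omega^{2n},\Theta$ denote the forms along $U$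 dual to $e_1,\dots,e_{2n},T$, and $\cdot|_M$ denotes pullback to $M$. *)

theory Defs
  imports "HOL-Analysis.Analysis"
begin

text \<open>A point (and a tangent vector) of H_n = R^(2n+1) is a triple (x,y,t) with
  x, y in R^n (indexed by the finite type 'n, n = CARD('n)) and t real.
  Tangent vectors are written in the same coordinates (dx, dy, dt).\<close>

type_synonym 'n pt = "(real^'n) \<times> (real^'n) \<times> real"

definition xc :: "'n::finite pt \<Rightarrow> real^'n" where "xc v = fst v"
definition yc :: "'n::finite pt \<Rightarrow> real^'n" where "yc v = fst (snd v)"
definition tc :: "'n::finite pt \<Rightarrow> real" where "tc v = snd (snd v)"

definition Theta :: "'n::finite pt \<Rightarrow> 'n pt \<Rightarrow> real" where
  "Theta p v = tc v + (\<Sum>b\<in>UNIV. xc p $ b * yc v $ b - yc p $ b * xc v $ b)"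

definition dTheta :: "'n::finite pt \<Rightarrow> 'n pt \<Rightarrow> real" where
  "dTheta X Y = 2 * (\<Sum>b\<in>UNIV. xc X $ b * yc Y $ b - yc X $ b * xc Y $ b)"

definition xi :: "'n::finite pt \<Rightarrow> 'n pt set" where
  "xi p = {v. Theta p v = 0}"

definition Tvec :: "'n::finite pt" where "Tvec = (0, 0, 1)"

definition e0x :: "'n::finite pt \<Rightarrow> 'n \<Rightarrow> 'n pt" where
  "e0x p b = (axis b 1, 0, yc p $ b)"
definition e0y :: "'n::finite pt \<Rightarrow> 'n \<Rightarrow> 'n pt" where
  "e0y p b = (0, axis b 1, - xc p $ b)"

text \<open>Complex structure J on xi_p: the linear map with J e0x = e0y, J e0y = - e0x.
  Written out: J(sum a_b e0x_b + c_b e0y_b) = sum a_b e0y_b - c_b e0x_b.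
  (The formula below is the unique linear extension that ignores the t-component;
  it is only used on vectors of xi_p.)\<close>
definition Jmap :: "'n::finite pt \<Rightarrow> 'n pt \<Rightarrow> 'n pt" where
  "Jmap p v = (- yc v, xc v, - (\<Sum>b\<in>UNIV. xc v $ b * xc p $ b + yc v $ b * yc p $ b))"

text \<open>Adapted metric at p: e0x_b, e0y_b, T orthonormal.  A vector v has
  coordinates (xc v, yc v) w.r.t. the e0x, e0y and Theta p v w.r.t. T.\<close>
definition gmet :: "'n::finite pt \<Rightarrow> 'n pt \<Rightarrow> 'n pt \<Rightarrow> real" where
  "gmet p v w = (\<Sum>b\<in>UNIV. xc v $ b * xc w $ b + yc v $ b * yc w $ b) + Theta p v * Theta p w"

text \<open>Levi metric <X,Y> = d Theta (X, J Y), and its Hermitian extension to the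
  complexification; a complex vector X1 + i X2 is represented by the pair (X1, X2).
  Complex-linear in the first slot, conjugate-linear in the second.\<close>
definition levi :: "'n::finite pt \<Rightarrow> 'n pt \<Rightarrow> 'n pt \<Rightarrow> real" where
  "levi p X Y = dTheta X (Jmap p Y)"

definition levi_c :: "'n::finite pt \<Rightarrow> 'n pt \<times> 'n pt \<Rightarrow> 'n pt \<times> 'n pt \<Rightarrow> complex" where
  "levi_c p X Y = Complex (levi p (fst X) (fst Y) + levi p (snd X) (snd Y))
                          (levi p (snd X) (fst Y) - levi p (fst X) (snd Y))"

definition submanifold_chart ::
  "'a::euclidean_space set \<Rightarrow> nat \<Rightarrow> 'a \<Rightarrow> 'a set \<Rightarrow> 'a set \<Rightarrow> 'a set
     \<Rightarrow> ('a \<Rightarrow> 'a) \<Rightarrow> ('a \<Rightarrow> 'a \<Rightarrow> 'a) \<Rightarrow> bool" where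
  "submanifold_chart M k p L D W phi phi' \<longleftrightarrow>
     subspace L \<and> dim L = k \<and> openin (top_of_set L) D \<and> open W \<and> p \<in> W \<and>
     (\<exists>psi. homeomorphism D (M \<inter> W) phi psi) \<and>
     (\<forall>x\<in>D. (phi has_derivative phi' x) (at x within D) \<and> inj_on (phi' x) L) \<and>
     (\<forall>v\<in>L. continuous_on D (\<lambda>x. phi' x v))"

definition is_submanifold :: "'a::euclidean_space set \<Rightarrow> nat \<Rightarrow> ('a \<Rightarrow> 'a set) \<Rightarrow> bool" where
  "is_submanifold M k TM \<longleftrightarrow>
     (\<forall>p\<in>M. \<exists>L D W phi phi' x. submanifold_chart M k p L D W phi phi' \<and>
          x \<in> D \<and> phi x = p \<and> TM p = phi' x ` L)"

definition hxi :: "('n::finite pt \<Rightarrow> 'n pt set) \<Rightarrow> 'n pt \<Rightarrow> 'n pt set" where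
  "hxi TM p = TM p \<inter> xi p"

definition hxi_perp :: "('n::finite pt \<Rightarrow> 'n pt set) \<Rightarrow> 'n pt \<Rightarrow> 'n pt set" where
  "hxi_perp TM p = {v \<in> xi p. \<forall>w\<in>hxi TM p. gmet p v w = 0}"

text \<open>(M, TM) is a pseudohermitian submanifold of H_n of CR dimension m.
  (That (M, J|, Theta|) is then pseudohermitian with ker = hxi is automatic.)\<close>
definition ph_submanifold :: "'n::finite pt set \<Rightarrow> ('n pt \<Rightarrow> 'n pt set) \<Rightarrow> nat \<Rightarrow> bool" where
  "ph_submanifold M TM m \<longleftrightarrow>
     is_submanifold M (2*m+1) TM \<and>
     (\<forall>p\<in>M. dim (hxi TM p) = 2*m \<and> (\<forall>v\<in>hxi TM p. Jmap p v \<in> hxi TM p))"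

definition fundamental_field ::
  "'n::finite pt set \<Rightarrow> ('n pt \<Rightarrow> 'n pt set) \<Rightarrow> ('n pt \<Rightarrow> 'n pt) \<Rightarrow> bool" where
  "fundamental_field M TM nu \<longleftrightarrow>
     (\<forall>p\<in>M. nu p \<in> hxi_perp TM p \<and> Tvec + nu p \<in> TM p)"

text \<open>Darboux frame e_1..e_2n over U (indices are natural numbers 1..2n, n = CARD('n)).\<close>
definition darboux_frame ::
  "('n::finite pt \<Rightarrow> 'n pt set) \<Rightarrow> nat \<Rightarrow> 'n pt set \<Rightarrow> (nat \<Rightarrow> 'n pt \<Rightarrow> 'n pt) \<Rightarrow> bool" where
  "darboux_frame TM m U e \<longleftrightarrow>
     (\<forall>p\<in>U.
        (\<forall>k\<in>{1..2*CARD('n)}. e k p \<in> xi p) \<and>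
        (\<forall>k\<in>{1..2*CARD('n)}. \<forall>l\<in>{1..2*CARD('n)}.
            gmet p (e k p) (e l p) = (if k = l then 1 else 0)) \<and>
        (\<forall>b\<in>{1..CARD('n)}. e (CARD('n) + b) p = Jmap p (e b p)) \<and>
        (\<forall>j\<in>{1..m}. e j p \<in> hxi TM p) \<and>
        (\<forall>a\<in>{m+1..CARD('n)}. e a p \<in> hxi_perp TM p))"

definition dual_forms ::
  "'n::finite pt set \<Rightarrow> (nat \<Rightarrow> 'n pt \<Rightarrow> 'n pt) \<Rightarrow> (nat \<Rightarrow> 'n pt \<Rightarrow> 'n pt \<Rightarrow> real) \<Rightarrow> bool" where
  "dual_forms U e \<omega> \<longleftrightarrow>
     (\<forall>p\<in>U. \<forall>k\<in>{1..2*CARD('n)}. linear (\<omega> k p) \<and>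
        (\<forall>l\<in>{1..2*CARD('n)}. \<omega> k p (e l p) = (if k = l then 1 else 0)) \<and>
        \<omega> k p Tvec = 0)"

definition ehat :: "nat \<Rightarrow> nat \<Rightarrow> (nat \<Rightarrow> 'n::finite pt \<Rightarrow> 'n pt) \<Rightarrow> nat \<Rightarrow> 'n pt \<Rightarrow> 'n pt" where
  "ehat n m e k p = (if k \<le> m then e k p else e (n + (k - m)) p)"

text \<open>hat omega^1..hat omega^2m, together with hat theta = Theta|_M, is the coframe on U
  dual to hat e_1..hat e_2m, hat T = T + nu: linear functionals on T_pM.\<close>
definition dual_hat_forms ::
  "('n::finite pt \<Rightarrow> 'n pt set) \<Rightarrow> nat \<Rightarrow> 'n pt set \<Rightarrow> (nat \<Rightarrow> 'n pt \<Rightarrow> 'n pt)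
     \<Rightarrow> ('n pt \<Rightarrow> 'n pt) \<Rightarrow> (nat \<Rightarrow> 'n pt \<Rightarrow> 'n pt \<Rightarrow> real) \<Rightarrow> bool" where
  "dual_hat_forms TM m U e nu \<omega>h \<longleftrightarrow>
     (\<forall>p\<in>U. \<forall>k\<in>{1..2*m}.
        (\<forall>u\<in>TM p. \<forall>w\<in>TM p. \<omega>h k p (u + w) = \<omega>h k p u + \<omega>h k p w) \<and>
        (\<forall>c. \<forall>u\<in>TM p. \<omega>h k p (c *\<^sub>R u) = c * \<omega>h k p u) \<and>
        (\<forall>l\<in>{1..2*m}. \<omega>h k p (ehat CARD('n) m e l p) = (if k = l then 1 else 0)) \<and>
        \<omega>h k p (Tvec + nu p) = 0)"

definition theta_c :: "nat \<Rightarrow> (nat \<Rightarrow> 'n::finite pt \<Rightarrow> 'n pt \<Rightarrow> real) \<Rightarrow> nat \<Rightarrow> 'n pt \<Rightarrow> 'n pt \<Rightarrow> complex" where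
  "theta_c n \<omega> b p v = Complex (\<omega> b p v) (\<omega> (n + b) p v)"

definition Zc :: "nat \<Rightarrow> (nat \<Rightarrow> 'n::finite pt \<Rightarrow> 'n pt) \<Rightarrow> nat \<Rightarrow> 'n pt \<Rightarrow> 'n pt \<times> 'n pt" where
  "Zc n e a p = ((1/2) *\<^sub>R e a p, - ((1/2) *\<^sub>R e (n + a) p))"

end

theory Submission
  imports Defs
begin

lemma orth_expand:
  fixes g :: "'a::euclidean_space \<Rightarrow> 'a \<Rightarrow> real" and f :: "nat \<Rightarrow> 'a"
  assumes lin: "\<And>y. linear (\<lambda>x. g x y)" and S: "subspace S" and dimS: "dim S \<le> N"
   and fS: "\<And>k. k \<in> {1..N} \<Longrightarrow> f k \<in> S"
   and orth: "\<And>k l. k \<in> {1..N} \<Longrightarrow> l \<in> {1..N} \<Longrightarrow> g (f k) (f l) = (if k = l then 1 else 0)"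
   and w: "w \<in> S"
  shows "w = (\<Sum>l\<in>{1..N}. g w (f l) *\<^sub>R f l)"
proof -
  have inj: "inj_on f {1..N}"
  proof (rule inj_onI)
    fix k l assume k: "k \<in> {1..N}" and l: "l \<in> {1..N}" and e: "f k = f l"
    have "g (f k) (f l) = 1" using orth[OF l l] e by simp
    then show "k = l" using orth[OF k l] by (auto split: if_splits)
  qed
  have sumg: "g (\<Sum>l\<in>{1..N}. c l *\<^sub>R f l) (f k) = c k" if k: "k \<in> {1..N}" for c k
  proof -
    have "g (\<Sum>l\<in>{1..N}. c l *\<^sub>R f l) (f k) = (\<Sum>l\<in>{1..N}. g (c l *\<^sub>R f l) (f k))"
      using linear_sum[OF lin[of "f k"]] by simp
    also have "\<dots> = (\<Sum>l\<in>{1..N}. c l * (if l = k then 1 else 0))"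
      using linear_scale[OF lin[of "f k"]] orth k by (intro sum.cong) auto
    also have "\<dots> = c k" using k by (simp add: if_distrib cong: if_cong)
    finally show ?thesis .
  qed
  have fin: "finite (f ` {1..N})" by simp
  have indep: "independent (f ` {1..N})"
  proof
    assume "dependent (f ` {1..N})"
    then obtain u where u: "\<exists>v\<in>f ` {1..N}. u v \<noteq> 0" "(\<Sum>v\<in>f ` {1..N}. u v *\<^sub>R v) = 0"
      using dependent_finite[OF fin] by blast
    have "(\<Sum>l\<in>{1..N}. u (f l) *\<^sub>R f l) = 0" using u(2) sum.reindex[OF inj, of "\<lambda>v. u v *\<^sub>R v"] by simp
    then have "u (f k) = 0" if "k \<in> {1..N}" for k
      using sumg[OF that, of "u \<circ> f"] linear_0[OF lin[of "f k"]] by simp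
    then show False using u(1) by auto
  qed
  have "S \<subseteq> span (f ` {1..N})"
    apply (rule card_ge_dim_independent[OF _ indep])
    using fS dimS card_image[OF inj] by auto
  then obtain u where "w = (\<Sum>v\<in>f ` {1..N}. u v *\<^sub>R v)" using w span_finite[OF fin] by auto
  then have wu: "w = (\<Sum>l\<in>{1..N}. u (f l) *\<^sub>R f l)" using sum.reindex[OF inj, of "\<lambda>v. u v *\<^sub>R v"] by simp
  have "g w (f l) = u (f l)" if "l \<in> {1..N}" for l using sumg[OF that, of "u \<circ> f"] wu by simp
  then show ?thesis by (subst wu) (intro sum.cong; simp)
qed

lemma addhom_sum:
  assumes S: "subspace S"
    and add: "\<And>u w. u \<in> S \<Longrightarrow> w \<in> S \<Longrightarrow> h (u + w) = h u + h w"
    and sc: "\<And>c u. u \<in> S \<Longrightarrow> h (c *\<^sub>R u) = c * h u"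
    and fin: "finite A" and x: "\<And>l. l \<in> A \<Longrightarrow> x l \<in> S"
  shows "h (\<Sum>l\<in>A. c l *\<^sub>R x l) = (\<Sum>l\<in>A. c l * h (x l))"
  using fin x
proof (induction A rule: finite_induct)
  case empty
  have "h 0 = h (0 *\<^sub>R 0)" by simp
  also have "\<dots> = 0" using sc[of 0 0] subspace_0[OF S] by simp
  finally show ?case by simp
next
  case (insert a A)
  have s: "(\<Sum>l\<in>A. c l *\<^sub>R x l) \<in> S"
    using insert by (intro subspace_sum[OF S] subspace_scale[OF S]) auto
  have "h (\<Sum>l\<in>insert a A. c l *\<^sub>R x l) = h (c a *\<^sub>R x a + (\<Sum>l\<in>A. c l *\<^sub>R x l))"
    using insert by simp
  also have "\<dots> = c a * h (x a) + h (\<Sum>l\<in>A. c l *\<^sub>R x l)"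
    using add[OF subspace_scale[OF S insert(4)[of a]] s] sc insert(4)[of a] by simp
  finally show ?case using insert by simp
qed

lemma xc_add[simp]: "xc (u + w) = xc u + xc w" and xc_scale[simp]: "xc (c *\<^sub>R u) = c *\<^sub>R xc u"
  and yc_add[simp]: "yc (u + w) = yc u + yc w" and yc_scale[simp]: "yc (c *\<^sub>R u) = c *\<^sub>R yc u"
  and tc_add[simp]: "tc (u + w) = tc u + tc w" and tc_scale[simp]: "tc (c *\<^sub>R u) = c *\<^sub>R tc u"
  and xcn[simp]: "xc (- u) = - xc u" and ycn[simp]: "yc (- u) = - yc u"
  and xc0[simp]: "xc 0 = 0" and yc0[simp]: "yc 0 = 0" and tc0[simp]: "tc 0 = 0"
  and xcT[simp]: "xc Tvec = 0" and ycT[simp]: "yc Tvec = 0" and tcT[simp]: "tc Tvec = 1"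
  by (auto simp: xc_def yc_def tc_def Tvec_def)

lemma Theta_add: "Theta p (u + w) = Theta p u + Theta p w"
  by (simp add: Theta_def algebra_simps sum.distrib[symmetric] sum_subtractf[symmetric])
lemma Theta_scale: "Theta p (c *\<^sub>R u) = c * Theta p u"
  by (simp add: Theta_def algebra_simps sum_distrib_left)
lemma Theta_T: "Theta p Tvec = 1" by (simp add: Theta_def)
lemma linear_Theta: "linear (Theta p)"
  by (rule linearI) (simp_all add: Theta_add Theta_scale)
lemma linear_gmet: "linear (\<lambda>v. gmet p v w)"
  by (rule linearI) (simp_all add: gmet_def Theta_add Theta_scale algebra_simps sum.distrib sum_distrib_left)

lemma levi_eq: "levi p X Y = 2 * (\<Sum>b\<in>UNIV. xc X $ b * xc Y $ b + yc X $ b * yc Y $ b)"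
  by (simp add: levi_def dTheta_def Jmap_def xc_def yc_def)

lemma levi_scale: "levi p X (c *\<^sub>R Y) = c * levi p X Y"
  by (simp add: levi_eq sum_distrib_left algebra_simps)
lemma levi_neg: "levi p X (- Y) = - levi p X Y"
  by (simp add: levi_eq sum_negf[symmetric] algebra_simps)
lemma levi_zero: "levi p 0 Y = 0"
  by (simp add: levi_eq)

lemma gmet_levi: "Theta p X = 0 \<Longrightarrow> gmet p X Y = 1/2 * levi p X Y"
  by (simp add: gmet_def levi_eq)

lemma subspace_xi: "subspace (xi p)"
  unfolding xi_def subspace_def
proof (intro conjI ballI allI)
  show "0 \<in> {v. Theta p v = 0}" by (simp add: Theta_def)
qed (simp_all add: Theta_add Theta_scale)


theorem proposition3p2:
  fixes M U :: "'n::finite pt set"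
    and TM :: "'n pt \<Rightarrow> 'n pt set"
    and nu :: "'n pt \<Rightarrow> 'n pt"
    and e :: "nat \<Rightarrow> 'n pt \<Rightarrow> 'n pt"
    and \<omega> \<omega>h :: "nat \<Rightarrow> 'n pt \<Rightarrow> 'n pt \<Rightarrow> real"
    and n m :: nat
  assumes n_def: "n = CARD('n)"
    and ph: "ph_submanifold M TM m"
    and nu: "fundamental_field M TM nu"
    and U: "openin (top_of_set M) U"
    and frame: "darboux_frame TM m U e"
    and omega: "dual_forms U e \<omega>"
    and omegah: "dual_hat_forms TM m U e nu \<omega>h"
  shows "\<forall>p\<in>U. \<forall>v\<in>TM p.
           (\<forall>j\<in>{1..m}. \<omega> j p v = \<omega>h j p v \<and> \<omega> (n + j) p v = \<omega>h (m + j) p v) \<and>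
           (\<forall>a\<in>{m+1..n}.
               \<omega> a p v = 1/2 * levi p (nu p) (e a p) * Theta p v \<and>
               \<omega> (n + a) p v = 1/2 * levi p (nu p) (e (n + a) p) * Theta p v) \<and>
           (\<forall>j\<in>{1..m}. theta_c n \<omega> j p v = Complex (\<omega>h j p v) (\<omega>h (m + j) p v)) \<and>
           (\<forall>a\<in>{m+1..n}. theta_c n \<omega> a p v
                 = levi_c p (nu p, 0) (Zc n e a p) * complex_of_real (Theta p v)) \<and>
           (nu p = 0 \<longrightarrow> (\<forall>a\<in>{m+1..n}. theta_c n \<omega> a p v = 0))"
proof (intro ballI)
  fix p v assume pU: "p \<in> U" and vT: "v \<in> TM p"
  have pM: "p \<in> M" using U pU openin_imp_subset by blast
  have "is_submanifold M (2*m+1) TM" using ph by (simp add: ph_submanifold_def)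
  then have "\<exists>L D W phi phi' x. submanifold_chart M (2*m+1) p L D W phi phi' \<and>
          x \<in> D \<and> phi x = p \<and> TM p = phi' x ` L"
    using pM unfolding is_submanifold_def by (rule bspec)
  then obtain L D W phi phi' x where ch: "submanifold_chart M (2*m+1) p L D W phi phi'"
      and xD: "x \<in> D" and TMp: "TM p = phi' x ` L"
    by blast
  have linphi: "linear (phi' x)" using ch xD unfolding submanifold_chart_def
    using has_derivative_linear by blast
  have STM: "subspace (TM p)" using ch TMp linear_subspace_image[OF linphi]
    unfolding submanifold_chart_def by auto
  have Shxi: "subspace (hxi TM p)" unfolding hxi_def using STM subspace_xi subspace_inter by blast
  have dimh: "dim (hxi TM p) = 2*m" and Jinv: "\<And>u. u \<in> hxi TM p \<Longrightarrow> Jmap p u \<in> hxi TM p"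
    using ph pM unfolding ph_submanifold_def by auto
  have "dim (hxi TM p) \<le> 2*n+1" using dim_subset_UNIV[of "hxi TM p"] n_def by simp
  then have mn: "m \<le> n" using dimh by simp
  have dimxi: "dim (xi p) \<le> 2*n"
  proof (rule ccontr)
    assume "\<not> dim (xi p) \<le> 2*n"
    moreover have "dim (xi p) \<le> 2*n+1" using dim_subset_UNIV[of "xi p"] n_def by simp
    ultimately have "dim (xi p) = DIM('n pt)" using n_def by simp
    then have "span (xi p) = UNIV" using dim_eq_full by blast
    then have "Tvec \<in> xi p" using span_eq_iff[of "xi p"] subspace_xi[of p] by auto
    then show False by (simp add: xi_def Theta_T)
  qed
  have fr1: "\<And>k. k \<in> {1..2*n} \<Longrightarrow> e k p \<in> xi p"
    and fr2: "\<And>k l. k \<in> {1..2*n} \<Longrightarrow> l \<in> {1..2*n} \<Longrightarrow> gmet p (e k p) (e l p) = (if k = l then 1 else 0)"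
    and fr3: "\<And>b. b \<in> {1..n} \<Longrightarrow> e (n + b) p = Jmap p (e b p)"
    and fr4: "\<And>j. j \<in> {1..m} \<Longrightarrow> e j p \<in> hxi TM p"
    and fr5: "\<And>a. a \<in> {m+1..n} \<Longrightarrow> e a p \<in> hxi_perp TM p"
    using frame pU n_def unfolding darboux_frame_def by auto
  have om1: "\<And>k. k \<in> {1..2*n} \<Longrightarrow> linear (\<omega> k p)"
    and om2: "\<And>k l. k \<in> {1..2*n} \<Longrightarrow> l \<in> {1..2*n} \<Longrightarrow> \<omega> k p (e l p) = (if k = l then 1 else 0)"
    and om3: "\<And>k. k \<in> {1..2*n} \<Longrightarrow> \<omega> k p Tvec = 0"
    using omega pU n_def unfolding dual_forms_def by auto
  have oh1: "\<And>k u w. k \<in> {1..2*m} \<Longrightarrow> u \<in> TM p \<Longrightarrow> w \<in> TM p \<Longrightarrow> \<omega>h k p (u + w) = \<omega>h k p u + \<omega>h k p w"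
    and oh2: "\<And>k c u. k \<in> {1..2*m} \<Longrightarrow> u \<in> TM p \<Longrightarrow> \<omega>h k p (c *\<^sub>R u) = c * \<omega>h k p u"
    and oh3: "\<And>k l. k \<in> {1..2*m} \<Longrightarrow> l \<in> {1..2*m} \<Longrightarrow> \<omega>h k p (ehat n m e l p) = (if k = l then 1 else 0)"
    and oh4: "\<And>k. k \<in> {1..2*m} \<Longrightarrow> \<omega>h k p (Tvec + nu p) = 0"
    using omegah pU n_def unfolding dual_hat_forms_def by auto
  have nuperp: "nu p \<in> hxi_perp TM p" and nuT: "Tvec + nu p \<in> TM p"
    using nu pM unfolding fundamental_field_def by auto
  have nuxi: "nu p \<in> xi p" using nuperp unfolding hxi_perp_def by auto
  have nuorth: "\<And>u. u \<in> hxi TM p \<Longrightarrow> gmet p (nu p) u = 0" using nuperp unfolding hxi_perp_def by auto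
  define idx where "idx l = (if l \<le> m then l else n + (l - m))" for l
  have eh: "ehat n m e l p = e (idx l) p" for l by (simp add: ehat_def idx_def)
  have idxr: "l \<in> {1..2*m} \<Longrightarrow> idx l \<in> {1..2*n}" for l using mn by (auto simp: idx_def)
  have idxinj: "l \<in> {1..2*m} \<Longrightarrow> l' \<in> {1..2*m} \<Longrightarrow> idx l = idx l' \<longleftrightarrow> l = l'" for l l'
    using mn by (auto simp: idx_def)
  have ehh: "l \<in> {1..2*m} \<Longrightarrow> e (idx l) p \<in> hxi TM p" for l
  proof -
    assume l: "l \<in> {1..2*m}"
    show ?thesis
    proof (cases "l \<le> m")
      case True then show ?thesis using l fr4 by (auto simp: idx_def)
    next
      case False
      have lm: "l - m \<in> {1..n}" using False l mn by auto
      have "e (idx l) p = e (n + (l - m)) p" using False by (simp add: idx_def)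
      then have "e (idx l) p = Jmap p (e (l - m) p)" using fr3[OF lm] by simp
      moreover have "l - m \<in> {1..m}" using False l by auto
      ultimately show ?thesis using Jinv fr4 by metis
    qed
  qed
  have ehTM: "l \<in> {1..2*m} \<Longrightarrow> e (idx l) p \<in> TM p" for l using ehh unfolding hxi_def by auto
  have Tnu: "Theta p (Tvec + nu p) = 1" using nuxi by (simp add: Theta_add Theta_T xi_def)
  define w where "w = v - Theta p v *\<^sub>R (Tvec + nu p)"
  have vw: "v = w + Theta p v *\<^sub>R (Tvec + nu p)" by (simp add: w_def)
  have wTM: "w \<in> TM p" unfolding w_def using STM vT nuT by (simp add: subspace_diff subspace_scale)
  have "Theta p w = 0" unfolding w_def using linear_Theta[of p] Tnu
    by (simp add: linear_diff Theta_scale)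
  then have wh: "w \<in> hxi TM p" using wTM by (simp add: hxi_def xi_def)
  define c where "c l = gmet p w (e (idx l) p)" for l
  have wexp: "w = (\<Sum>l\<in>{1..2*m}. c l *\<^sub>R e (idx l) p)"
    unfolding c_def
    by (rule orth_expand[OF linear_gmet Shxi _ ehh _ wh]) (use dimh fr2 idxr idxinj in auto)
  have nuexp: "nu p = (\<Sum>l\<in>{1..2*n}. gmet p (nu p) (e l p) *\<^sub>R e l p)"
    by (rule orth_expand[OF linear_gmet subspace_xi dimxi fr1 fr2 nuxi])
  have omnu: "\<omega> k p (nu p) = gmet p (nu p) (e k p)" if k: "k \<in> {1..2*n}" for k
  proof -
    have "\<omega> k p (nu p) = (\<Sum>l\<in>{1..2*n}. gmet p (nu p) (e l p) * (if k = l then 1 else 0))"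
      by (subst nuexp) (simp add: linear_sum[OF om1[OF k]] linear_scale[OF om1[OF k]] om2[OF k])
    also have "\<dots> = gmet p (nu p) (e k p)" using k by (simp add: if_distrib cong: if_cong)
    finally show ?thesis .
  qed
  have omw: "\<omega> k p w = (\<Sum>l\<in>{1..2*m}. c l * (if k = idx l then 1 else 0))" if k: "k \<in> {1..2*n}" for k
  proof -
    have "\<omega> k p w = (\<Sum>l\<in>{1..2*m}. c l * \<omega> k p (e (idx l) p))"
      by (subst wexp) (simp add: linear_sum[OF om1[OF k]] linear_scale[OF om1[OF k]])
    also have "\<dots> = (\<Sum>l\<in>{1..2*m}. c l * (if k = idx l then 1 else 0))"
      by (rule sum.cong[OF refl]) (simp add: om2[OF k idxr])
    finally show ?thesis .
  qed
  have omv: "\<omega> k p v = \<omega> k p w + Theta p v * gmet p (nu p) (e k p)" if k: "k \<in> {1..2*n}" for k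
    using k by (subst vw) (simp add: linear_add[OF om1[OF k]] linear_scale[OF om1[OF k]] om3 omnu)
  have ohw: "\<omega>h k p w = c k" if k: "k \<in> {1..2*m}" for k
  proof -
    have "\<omega>h k p w = (\<Sum>l\<in>{1..2*m}. c l * \<omega>h k p (e (idx l) p))"
      by (subst wexp, rule addhom_sum[OF STM]) (use k oh1 oh2 ehTM in auto)
    also have "\<dots> = (\<Sum>l\<in>{1..2*m}. c l * (if k = l then 1 else 0))"
      using oh3[OF k] eh by (intro sum.cong) auto
    also have "\<dots> = c k" using k by (simp add: if_distrib cong: if_cong)
    finally show ?thesis .
  qed
  have ohv: "\<omega>h k p v = c k" if k: "k \<in> {1..2*m}" for k
  proof -
    have "\<omega>h k p v = \<omega>h k p w + \<omega>h k p (Theta p v *\<^sub>R (Tvec + nu p))"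
      by (subst vw, rule oh1[OF k wTM]) (use STM nuT in \<open>simp add: subspace_scale\<close>)
    then show ?thesis using oh2[OF k nuT] oh4[OF k] ohw[OF k] by simp
  qed
  have A: "\<omega> j p v = \<omega>h j p v \<and> \<omega> (n + j) p v = \<omega>h (m + j) p v" if j: "j \<in> {1..m}" for j
  proof -
    have j1: "j \<in> {1..2*n}" "n + j \<in> {1..2*n}" "j \<in> {1..2*m}" "m + j \<in> {1..2*m}" using j mn by auto
    have g1: "gmet p (nu p) (e j p) = 0" using nuorth fr4 j by auto
    have g2: "gmet p (nu p) (e (n+j) p) = 0" using nuorth fr4 j Jinv fr3[of j] mn by auto
    have s1: "(\<Sum>l\<in>{1..2*m}. c l * (if j = idx l then 1 else 0)) = (\<Sum>l\<in>{1..2*m}. c l * (if l = j then 1 else 0))"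
      using j mn by (intro sum.cong) (auto simp: idx_def)
    have s2: "(\<Sum>l\<in>{1..2*m}. c l * (if n + j = idx l then 1 else 0)) = (\<Sum>l\<in>{1..2*m}. c l * (if l = m + j then 1 else 0))"
      using j mn by (intro sum.cong) (auto simp: idx_def)
    show ?thesis using j1 g1 g2 omv omw ohv s1 s2 by (simp add: if_distrib cong: if_cong)
  qed
  have B: "\<omega> a p v = 1/2 * levi p (nu p) (e a p) * Theta p v \<and>
           \<omega> (n + a) p v = 1/2 * levi p (nu p) (e (n + a) p) * Theta p v" if a: "a \<in> {m+1..n}" for a
  proof -
    have a1: "a \<in> {1..2*n}" "n + a \<in> {1..2*n}" using a by auto
    have s1: "(\<Sum>l\<in>{1..2*m}. c l * (if a = idx l then 1 else 0)) = 0"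
      using a mn by (intro sum.neutral) (auto simp: idx_def)
    have s2: "(\<Sum>l\<in>{1..2*m}. c l * (if n + a = idx l then 1 else 0)) = 0"
      using a mn by (intro sum.neutral) (auto simp: idx_def)
    have T0: "Theta p (nu p) = 0" using nuxi by (simp add: xi_def)
    show ?thesis using omv[OF a1(1)] omv[OF a1(2)] omw[OF a1(1)] omw[OF a1(2)] s1 s2 gmet_levi[OF T0]
      by simp
  qed
  have C: "theta_c n \<omega> a p v = levi_c p (nu p, 0) (Zc n e a p) * complex_of_real (Theta p v)"
    if a: "a \<in> {m+1..n}" for a
    using B[OF a]
    by (simp add: theta_c_def levi_c_def Zc_def levi_scale levi_neg levi_zero complex_eq_iff)
  have D: "nu p = 0 \<longrightarrow> (\<forall>a\<in>{m+1..n}. theta_c n \<omega> a p v = 0)"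
    using C by (simp add: levi_c_def levi_zero complex_eq_iff)
  show "(\<forall>j\<in>{1..m}. \<omega> j p v = \<omega>h j p v \<and> \<omega> (n + j) p v = \<omega>h (m + j) p v) \<and>
           (\<forall>a\<in>{m+1..n}.
               \<omega> a p v = 1/2 * levi p (nu p) (e a p) * Theta p v \<and>
               \<omega> (n + a) p v = 1/2 * levi p (nu p) (e (n + a) p) * Theta p v) \<and>
           (\<forall>j\<in>{1..m}. theta_c n \<omega> j p v = Complex (\<omega>h j p v) (\<omega>h (m + j) p v)) \<and>
           (\<forall>a\<in>{m+1..n}. theta_c n \<omega> a p v
                 = levi_c p (nu p, 0) (Zc n e a p) * complex_of_real (Theta p v)) \<and>
           (nu p = 0 \<longrightarrow> (\<forall>a\<in>{m+1..n}. theta_c n \<omega> a p v = 0))"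
    using A B C D by (simp add: theta_c_def)
qed

end
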